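(* Let $a>0$, let $J$ be a standard normal random variable, and for $t\in[0,1]$ let $X(t)=(1-t)e^{2J}+ta$. Then there exists a constant $\mathcal C>0$, depending only on $a$, such that $d_{TV}(X(t),X(0))\le \mathcal C t$ for every $t\in[0,1]$.
   Context: $d_{TV}$ denotes the total variation distance between the distributions of the two random variables. *)

theory Defs
  imports "HOL-Probability.Probability"
begin

definition tv_dist :: "real measure \<Rightarrow> real measure \<Rightarrow> real" where
  "tv_dist P Q = (SUP A \<in> sets borel. \<bar>measure P A - measure Q A\<bar>)"

end

theory Submission
  imports Defs "HOL-Probability.Probability"
begin

lemma shift_int:
  fixes h :: "real \<Rightarrow> real"
  shows "(\<integral>y. h y \<partial>lborel) = (\<integral>x. h (x + s) \<partial>lborel)"
  using lborel_integral_real_affine[of 1 h s] by (simp add: add.commute)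

lemma shift_bound_pos:
  fixes f :: "real \<Rightarrow> real" and A :: "real set"
  assumes fm[measurable]: "f \<in> borel_measurable borel" and fi: "integrable lborel f"
   and f0: "\<And>x. 0 \<le> f x" and fK: "\<And>x. f x \<le> K"
   and inc: "\<And>x y. x \<le> y \<Longrightarrow> y \<le> m \<Longrightarrow> f x \<le> f y"
   and dec: "\<And>x y. m \<le> x \<Longrightarrow> x \<le> y \<Longrightarrow> f y \<le> f x"
   and A[measurable]: "A \<in> sets borel" and s: "0 \<le> s"
  shows "abs ((\<integral>x. indicator A (x + s) * f x \<partial>lborel) - (\<integral>x. indicator A x * f x \<partial>lborel)) \<le> 2 * K * s"
proof -
  have gi: "integrable lborel (\<lambda>y. f (y - s))"
    using lborel_integrable_real_affine[OF fi, of 1 "-s"] by simp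
  have ind: "integrable lborel (\<lambda>y. f y * indicator B y)" "integrable lborel (\<lambda>y. f (y - s) * indicator B y)"
    "integrable lborel (\<lambda>y. indicator B y * f y)" "integrable lborel (\<lambda>y. indicator B y * f (y - s))"
    if "B \<in> sets borel" for B
    using integrable_real_mult_indicator[OF _ fi, of B] integrable_real_mult_indicator[OF _ gi, of B] that by (auto simp: mult.commute)
  have KIg: "(\<integral>y. K * indicator {a..<b} y \<partial>lborel) = K * (b - a)" if "a \<le> b" for a b :: real
    using that by simp
  have KI: "(\<integral>y. K * indicator {m..<m+s} y \<partial>lborel) = K * s" using KIg[of m "m+s"] s by simp
  have KIi: "integrable lborel (\<lambda>y. K * indicator {a..<b} y :: real)" if "a \<le> b" for a b :: real
    using that by (intro integrable_mult_right integrable_real_indicator) (auto simp: emeasure_lborel_Ico)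
  have T: "(\<integral>x. indicator A (x + s) * f x \<partial>lborel) = (\<integral>y. indicator A y * f (y - s) \<partial>lborel)"
    by (subst shift_int[of _ s]) simp
  have T2: "(\<integral>y. f (y - s) * indicator {m+s..} y \<partial>lborel) = (\<integral>x. f x * indicator {m..} x \<partial>lborel)"
    by (subst shift_int[of _ s]) (simp add: indicator_def)
  have T3: "(\<integral>y. f (y - s) * indicator {..<m} y \<partial>lborel) = (\<integral>x. f x * indicator {..<m-s} x \<partial>lborel)"
    by (subst shift_int[of _ s]) (simp add: indicator_def less_diff_eq)
  have D1: "(\<integral>x. f x * indicator {m..} x \<partial>lborel) - (\<integral>x. f x * indicator {m+s..} x \<partial>lborel) \<le> K * s"
  proof -
    have "(\<integral>x. f x * indicator {m..} x \<partial>lborel) - (\<integral>x. f x * indicator {m+s..} x \<partial>lborel)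
        = (\<integral>x. f x * indicator {m..} x - f x * indicator {m+s..} x \<partial>lborel)"
      by (subst Bochner_Integration.integral_diff) (auto intro: ind)
    also have "\<dots> \<le> (\<integral>y. K * indicator {m..<m+s} y \<partial>lborel)"
      apply (rule Bochner_Integration.integral_mono)
        apply (intro Bochner_Integration.integrable_diff ind; simp)
       apply (rule KIi, use s in simp)
      apply (auto simp: indicator_def fK f0)
      done
    also have "\<dots> = K * s" by (rule KI)
    finally show ?thesis .
  qed
  have D2: "(\<integral>x. f x * indicator {..<m} x \<partial>lborel) - (\<integral>x. f x * indicator {..<m-s} x \<partial>lborel) \<le> K * s"
  proof -
    have "(\<integral>x. f x * indicator {..<m} x \<partial>lborel) - (\<integral>x. f x * indicator {..<m-s} x \<partial>lborel)
        = (\<integral>x. f x * indicator {..<m} x - f x * indicator {..<m-s} x \<partial>lborel)"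
      by (subst Bochner_Integration.integral_diff) (auto intro: ind)
    also have "\<dots> \<le> (\<integral>y. K * indicator {m-s..<m} y \<partial>lborel)"
      apply (rule Bochner_Integration.integral_mono)
        apply (intro Bochner_Integration.integrable_diff ind; simp)
       apply (rule KIi, use s in simp)
      apply (auto simp: indicator_def fK f0)
      done
    also have "\<dots> = K * s" using KIg[of "m-s" m] s by simp
    finally show ?thesis .
  qed
  have diff: "(\<integral>y. indicator A y * f (y - s) \<partial>lborel) - (\<integral>x. indicator A x * f x \<partial>lborel)
      = (\<integral>y. f (y - s) * indicator A y - f y * indicator A y \<partial>lborel)"
    by (subst Bochner_Integration.integral_diff) (auto intro: ind simp: mult.commute)
  have up: "(\<integral>y. f (y - s) * indicator A y - f y * indicator A y \<partial>lborel)
      \<le> (\<integral>y. K * indicator {m..<m+s} y + (f (y - s) * indicator {m+s..} y - f y * indicator {m+s..} y) \<partial>lborel)"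
  proof (rule Bochner_Integration.integral_mono)
    fix y
    show "f (y - s) * indicator A y - f y * indicator A y
      \<le> K * indicator {m..<m+s} y + (f (y - s) * indicator {m+s..} y - f y * indicator {m+s..} y)"
    proof (cases "y < m")
      case True
      then show ?thesis using inc[of "y-s" y] s f0[of y] f0[of "y-s"] by (auto simp: indicator_def)
    next
      case False
      then show ?thesis using dec[of "y-s" y] s f0[of y] f0[of "y-s"] fK[of "y-s"] by (auto simp: indicator_def)
    qed
  qed (intro Bochner_Integration.integrable_diff Bochner_Integration.integrable_add KIi ind; use s in simp)+
  have up2: "(\<integral>y. K * indicator {m..<m+s} y + (f (y - s) * indicator {m+s..} y - f y * indicator {m+s..} y) \<partial>lborel)
     = K * s + ((\<integral>x. f x * indicator {m..} x \<partial>lborel) - (\<integral>x. f x * indicator {m+s..} x \<partial>lborel))"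
    using s by (simp add: KIi ind KI T2)
  have lo: "-(\<integral>y. f (y - s) * indicator A y - f y * indicator A y \<partial>lborel)
      \<le> (\<integral>y. K * indicator {m..<m+s} y + (f y * indicator {..<m} y - f (y - s) * indicator {..<m} y) \<partial>lborel)"
  proof -
    have "-(\<integral>y. f (y - s) * indicator A y - f y * indicator A y \<partial>lborel)
       = (\<integral>y. f y * indicator A y - f (y - s) * indicator A y \<partial>lborel)"
      by (simp add: Bochner_Integration.integral_minus[symmetric])
    also have "\<dots> \<le> (\<integral>y. K * indicator {m..<m+s} y + (f y * indicator {..<m} y - f (y - s) * indicator {..<m} y) \<partial>lborel)"
    proof (rule Bochner_Integration.integral_mono)
      fix y
      show "f y * indicator A y - f (y - s) * indicator A y
        \<le> K * indicator {m..<m+s} y + (f y * indicator {..<m} y - f (y - s) * indicator {..<m} y)"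
      proof (cases "y < m")
        case True
        then show ?thesis using inc[of "y-s" y] s f0[of y] f0[of "y-s"] by (auto simp: indicator_def)
      next
        case False
        then show ?thesis using dec[of "y-s" y] s f0[of y] f0[of "y-s"] fK[of "y"] by (auto simp: indicator_def)
      qed
    qed (intro Bochner_Integration.integrable_diff Bochner_Integration.integrable_add KIi ind; use s in simp)+
    finally show ?thesis .
  qed
  have lo2: "(\<integral>y. K * indicator {m..<m+s} y + (f y * indicator {..<m} y - f (y - s) * indicator {..<m} y) \<partial>lborel)
     = K * s + ((\<integral>x. f x * indicator {..<m} x \<partial>lborel) - (\<integral>x. f x * indicator {..<m-s} x \<partial>lborel))"
    using s by (simp add: KIi ind KI T3)
  show ?thesis
    unfolding T diff using up up2 lo lo2 D1 D2 by linarith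
qed

lemma shift_bound:
  fixes f :: "real \<Rightarrow> real" and A :: "real set"
  assumes fm[measurable]: "f \<in> borel_measurable borel" and fi: "integrable lborel f"
   and f0: "\<And>x. 0 \<le> f x" and fK: "\<And>x. f x \<le> K"
   and inc: "\<And>x y. x \<le> y \<Longrightarrow> y \<le> m \<Longrightarrow> f x \<le> f y"
   and dec: "\<And>x y. m \<le> x \<Longrightarrow> x \<le> y \<Longrightarrow> f y \<le> f x"
   and A[measurable]: "A \<in> sets borel"
  shows "abs ((\<integral>x. indicator A (x + s) * f x \<partial>lborel) - (\<integral>x. indicator A x * f x \<partial>lborel)) \<le> 2 * K * abs s"
proof (cases "0 \<le> s")
  case True
  then show ?thesis using shift_bound_pos[OF fm fi f0 fK inc dec A True] by simp
next
  case False
  define B where "B = {y. y + s \<in> A}"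
  have B[measurable]: "B \<in> sets borel" unfolding B_def by measurable
  have "abs ((\<integral>x. indicator B (x + (-s)) * f x \<partial>lborel) - (\<integral>x. indicator B x * f x \<partial>lborel)) \<le> 2 * K * (-s)"
    using False by (intro shift_bound_pos[OF fm fi f0 fK inc dec B]) auto
  moreover have "(\<lambda>x. indicator B (x + (-s)) * f x) = (\<lambda>x. indicator A x * f x)"
    "(\<lambda>x. indicator B x * f x) = (\<lambda>x. indicator A (x + s) * f x)"
    by (auto simp: B_def indicator_def)
  ultimately show ?thesis using False by simp
qed

definition lnd :: "real \<Rightarrow> real" where
  "lnd u = (if 0 < u then exp (- (ln u)\<^sup>2 / 8 - ln u) / (2 * sqrt (2 * pi)) else 0)"

lemma lnd_measurable[measurable]: "lnd \<in> borel_measurable borel"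
  unfolding lnd_def by measurable

lemma lnd_formula:
  fixes A :: "real set"
  assumes A[measurable]: "A \<in> sets borel"
  shows "integrable lborel (\<lambda>u. indicator A u * lnd u)"
    "(\<integral>u. indicator A u * lnd u \<partial>lborel) = (\<integral>x. indicator A (exp (2*x)) * std_normal_density x \<partial>lborel)"
proof -
  define F where "F x = indicator A (exp (2*x)) * std_normal_density x" for x
  define S :: "real set" where "S = {0<..}"
  have Fm[measurable]: "F \<in> borel_measurable borel" unfolding F_def by measurable
  have Fi: "integrable lborel F"
  proof -
    have "integrable lborel (\<lambda>x. std_normal_density x * indicator {x. exp (2*x) \<in> A} x)"
      by (rule integrable_real_mult_indicator) auto
    then show ?thesis unfolding F_def by (simp add: indicator_def mult.commute)
  qed
  have Fabs: "F absolutely_integrable_on UNIV"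
    using Fi by (simp add: set_integrable_def integrable_completion)
  have img: "(\<lambda>u. ln u / 2) ` S = UNIV"
  proof -
    have "x \<in> (\<lambda>u. ln u / 2) ` S" for x
      by (rule image_eqI[of _ _ "exp (2*x)"]) (auto simp: S_def)
    then show ?thesis by auto
  qed
  have der: "((\<lambda>u. ln u / 2) has_field_derivative (1 / (2*u))) (at u within S)" if "u \<in> S" for u
    using that unfolding S_def
    by (auto intro!: derivative_eq_intros)
  have inj: "inj_on (\<lambda>u. ln u / 2) S" unfolding S_def by (auto simp: inj_on_def)
  have S: "S \<in> sets lebesgue" unfolding S_def by simp
  have cv: "(\<lambda>u. \<bar>1 / (2*u)\<bar> * F (ln u / 2)) absolutely_integrable_on S \<and>
           integral S (\<lambda>u. \<bar>1 / (2*u)\<bar> * F (ln u / 2)) = integral UNIV F"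
    using has_absolute_integral_change_of_variables_1'[OF S der inj, of F "integral UNIV F"] Fabs img by simp
  have pw: "indicator S u * (\<bar>1 / (2*u)\<bar> * F (ln u / 2)) = indicator A u * lnd u" for u
  proof (cases "0 < u")
    case True
    have "exp (- (ln u)\<^sup>2 / 8 - ln u) = exp (- (ln u)\<^sup>2 / 8) / u"
      using True by (simp add: exp_diff)
    moreover have "(ln u / 2)\<^sup>2 / 2 = (ln u)\<^sup>2 / 8" by (simp add: power_divide)
    ultimately show ?thesis using True
      by (simp add: S_def F_def lnd_def std_normal_density_def exp_ln indicator_def field_simps)
  next
    case False
    then show ?thesis by (simp add: S_def lnd_def)
  qed
  have I1: "integrable lebesgue (\<lambda>u. indicator A u * lnd u)"
    using cv[THEN conjunct1] unfolding set_integrable_def real_scaleR_def pw .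
  show I2: "integrable lborel (\<lambda>u. indicator A u * lnd u)"
    using I1 by (simp add: integrable_completion)
  have "(\<integral>u. indicator A u * lnd u \<partial>lborel) = (\<integral>u. indicator A u * lnd u \<partial>lebesgue)"
    by (simp add: integral_completion)
  also have "\<dots> = (LINT u:S|lebesgue. \<bar>1 / (2*u)\<bar> * F (ln u / 2))"
    unfolding set_lebesgue_integral_def real_scaleR_def pw ..
  also have "\<dots> = integral S (\<lambda>u. \<bar>1 / (2*u)\<bar> * F (ln u / 2))"
    using cv by (intro set_lebesgue_integral_eq_integral) auto
  also have "\<dots> = integral UNIV F" using cv by simp
  also have "\<dots> = (\<integral>x. F x \<partial>lborel)" using Fi by (rule integral_lborel)
  finally show "(\<integral>u. indicator A u * lnd u \<partial>lborel) = (\<integral>x. indicator A (exp (2*x)) * std_normal_density x \<partial>lborel)"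
    by (simp add: F_def)
qed

lemma lnd_nonneg: "0 \<le> lnd u"
  by (simp add: lnd_def)

lemma lnd_le: "lnd u \<le> 9"
proof (cases "0 < u")
  case True
  have "- (ln u)\<^sup>2 / 8 - ln u \<le> 2"
    using zero_le_power2[of "ln u + 4"] by (simp add: power2_eq_square algebra_simps)
  then have "exp (- (ln u)\<^sup>2 / 8 - ln u) \<le> exp 2" by simp
  also have "exp (2::real) = exp 1 * exp 1" by (simp add: exp_add[symmetric])
  also have "\<dots> \<le> 3 * 3" using exp_le by (intro mult_mono) auto
  finally have e: "exp (- (ln u)\<^sup>2 / 8 - ln u) \<le> 9" by simp
  have "1 \<le> 2 * sqrt (2 * pi)"
  proof -
    have "sqrt 1 \<le> sqrt (2*pi)" using pi_gt3 by (subst real_sqrt_le_iff) simp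
    then have "1 \<le> sqrt (2*pi)" by (simp only: real_sqrt_one)
    then show ?thesis by linarith
  qed
  then have "exp (- (ln u)\<^sup>2 / 8 - ln u) / (2 * sqrt (2 * pi)) \<le> exp (- (ln u)\<^sup>2 / 8 - ln u)"
    by (simp add: divide_le_eq mult_le_cancel_left1)
  with e True show ?thesis by (simp add: lnd_def)
next
  case False
  then show ?thesis by (simp add: lnd_def)
qed

lemma lnd_inc:
  assumes "x \<le> y" "y \<le> exp (-4)"
  shows "lnd x \<le> lnd y"
proof (cases "0 < x")
  case True
  have y: "0 < y" using True assms by simp
  have lx: "ln x \<le> ln y" using True assms by simp
  have ly: "ln y \<le> -4" using y assms ln_le_cancel_iff[of y "exp (-4)"] by simp
  have "0 \<le> - (ln y + ln x) / 8 - 1" using lx ly by (simp add: field_simps)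
  then have "0 \<le> (ln y - ln x) * (- (ln y + ln x) / 8 - 1)"
    using lx by (intro mult_nonneg_nonneg) auto
  moreover have "(ln y - ln x) * (- (ln y + ln x) / 8 - 1) = (- (ln y)\<^sup>2 / 8 - ln y) - (- (ln x)\<^sup>2 / 8 - ln x)"
    by (simp add: power2_eq_square field_simps)
  ultimately have "- (ln x)\<^sup>2 / 8 - ln x \<le> - (ln y)\<^sup>2 / 8 - ln y"
    by simp
  then show ?thesis using True y by (simp add: lnd_def divide_right_mono)
next
  case False
  then show ?thesis using lnd_nonneg[of y] by (simp add: lnd_def)
qed

lemma lnd_dec:
  assumes "exp (-4) \<le> x" "x \<le> y"
  shows "lnd y \<le> lnd x"
proof -
  have x: "0 < x" using assms(1) by (rule order.strict_trans2[OF exp_gt_zero])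
  have y: "0 < y" using x assms by simp
  have lx: "ln x \<le> ln y" using x assms by simp
  have ly: "-4 \<le> ln x" using x assms ln_le_cancel_iff[of "exp (-4)" x] by simp
  have "0 \<le> (ln y + ln x) / 8 + 1" using lx ly by (simp add: field_simps)
  then have "0 \<le> (ln y - ln x) * ((ln y + ln x) / 8 + 1)"
    using lx by (intro mult_nonneg_nonneg) auto
  moreover have "(ln y - ln x) * ((ln y + ln x) / 8 + 1) = (- (ln x)\<^sup>2 / 8 - ln x) - (- (ln y)\<^sup>2 / 8 - ln y)"
    by (simp add: power2_eq_square field_simps)
  ultimately have "- (ln y)\<^sup>2 / 8 - ln y \<le> - (ln x)\<^sup>2 / 8 - ln x"
    by simp
  then show ?thesis using x y by (simp add: lnd_def divide_right_mono)
qed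

lemma snd_le: "std_normal_density x \<le> 1"
proof -
  have "sqrt 1 \<le> sqrt (2*pi)" using pi_gt3 by (subst real_sqrt_le_iff) simp
  then have s1: "1 \<le> sqrt (2 * pi)" by (simp only: real_sqrt_one)
  have e: "exp (- x\<^sup>2 / 2) \<le> 1" by simp
  have "1 / sqrt (2 * pi) \<le> 1" using s1 by simp
  then show ?thesis unfolding std_normal_density_def using e
    by (intro mult_le_one) auto
qed

lemma sq_le: "(x::real) \<le> y \<Longrightarrow> y \<le> 0 \<Longrightarrow> y * y \<le> x * x"
proof -
  assume a: "x \<le> y" "y \<le> 0"
  have "(-y) * (-y) \<le> (-x) * (-x)" using a by (intro mult_mono) auto
  then show ?thesis by simp
qed

lemma snd_inc:
  assumes "x \<le> y" "y \<le> 0"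
  shows "std_normal_density x \<le> std_normal_density y"
proof -
  have "y * y \<le> x * x" using assms by (rule sq_le)
  then have "- (x\<^sup>2) / 2 \<le> - (y\<^sup>2) / 2" by (simp add: power2_eq_square)
  then have "exp (- (x\<^sup>2) / 2) \<le> exp (- (y\<^sup>2) / 2)" by (simp only: exp_le_cancel_iff)
  then show ?thesis unfolding std_normal_density_def by (intro mult_left_mono) auto
qed

lemma snd_dec:
  assumes "0 \<le> x" "x \<le> y"
  shows "std_normal_density y \<le> std_normal_density x"
proof -
  have "x * x \<le> y * y" using assms by (intro mult_mono) auto
  then have "- (y\<^sup>2) / 2 \<le> - (x\<^sup>2) / 2" by (simp add: power2_eq_square)
  then have "exp (- (y\<^sup>2) / 2) \<le> exp (- (x\<^sup>2) / 2)" by (simp only: exp_le_cancel_iff)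
  then show ?thesis unfolding std_normal_density_def by (intro mult_left_mono) auto
qed

lemma prob_formula:
  assumes D: "distributed M lborel J (\<lambda>x. ennreal (std_normal_density x))"
    and h[measurable]: "h \<in> borel_measurable borel" and A[measurable]: "A \<in> sets borel"
  shows "measure (distr M borel (\<lambda>\<omega>. h (J \<omega>))) A = (\<integral>x. indicator A (h x) * std_normal_density x \<partial>lborel)"
proof -
  have Jm[measurable]: "J \<in> borel_measurable M" using distributed_measurable[OF D] by simp
  have "(\<integral>x. indicator A (h x) * std_normal_density x \<partial>lborel) = (\<integral>x. std_normal_density x * indicator A (h x) \<partial>lborel)"
    by (simp add: mult.commute)
  also have "\<dots> = (\<integral>\<omega>. indicator A (h (J \<omega>)) \<partial>M)"
    by (rule distributed_integral[OF D]) auto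
  also have "(\<lambda>\<omega>. indicator A (h (J \<omega>)) :: real) = indicator ((\<lambda>\<omega>. h (J \<omega>)) -` A)"
    by (auto simp: indicator_def)
  also have "integral\<^sup>L M (indicator ((\<lambda>\<omega>. h (J \<omega>)) -` A)) = measure M ((\<lambda>\<omega>. h (J \<omega>)) -` A \<inter> space M)"
    by (rule Bochner_Integration.integral_indicator)
  also have "\<dots> = measure (distr M borel (\<lambda>\<omega>. h (J \<omega>))) A"
    by (rule measure_distr[symmetric]) auto
  finally show ?thesis ..
qed

theorem lemma10:
  fixes a :: real
  assumes "a > 0"
  shows "\<exists>C>0. \<forall>(M :: 'a measure) (J :: 'a \<Rightarrow> real).
           prob_space M \<and> distributed M lborel J (\<lambda>x. ennreal (std_normal_density x)) \<longrightarrow>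
           (\<forall>t\<in>{0..1::real}.
              tv_dist (distr M borel (\<lambda>\<omega>. (1 - t) * exp (2 * J \<omega>) + t * a))
                      (distr M borel (\<lambda>\<omega>. (1 - 0) * exp (2 * J \<omega>) + 0 * a))
              \<le> C * t)"
proof (intro exI[of _ "36 * a + 2"] conjI allI impI ballI)
  show "0 < 36 * a + 2" using assms by simp
  fix M :: "'a measure" and J :: "'a \<Rightarrow> real" and t :: real
  assume H: "prob_space M \<and> distributed M lborel J (\<lambda>x. ennreal (std_normal_density x))"
  assume t: "t \<in> {0..1}"
  have PS: "prob_space M" and D: "distributed M lborel J (\<lambda>x. ennreal (std_normal_density x))" using H by auto
  have Jm[measurable]: "J \<in> borel_measurable M" using distributed_measurable[OF D] by simp
  let ?P = "distr M borel (\<lambda>\<omega>. (1 - t) * exp (2 * J \<omega>) + t * a)"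
  let ?Q = "distr M borel (\<lambda>\<omega>. (1 - 0) * exp (2 * J \<omega>) + 0 * a)"
  have bnd: "\<bar>measure ?P A - measure ?Q A\<bar> \<le> (36 * a + 2) * t" if A[measurable]: "A \<in> sets borel" for A
  proof -
    have P: "measure ?P A = (\<integral>x. indicator A ((1 - t) * exp (2 * x) + t * a) * std_normal_density x \<partial>lborel)"
      by (rule prob_formula[OF D, of "\<lambda>x. (1 - t) * exp (2 * x) + t * a"]) auto
    have Q: "measure ?Q A = (\<integral>x. indicator A (exp (2 * x)) * std_normal_density x \<partial>lborel)"
      using prob_formula[OF D, of "\<lambda>x. (1 - 0) * exp (2 * x) + 0 * a" A] by simp
    show ?thesis
    proof (cases "t \<le> 1/2")
      case False
      have PP: "prob_space ?P" by (rule prob_space.prob_space_distr[OF PS]) auto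
      have PQ: "prob_space ?Q" by (rule prob_space.prob_space_distr[OF PS]) auto
      have "measure ?P A \<le> 1" using prob_space.prob_le_1[OF PP] .
      moreover have "measure ?Q A \<le> 1" using prob_space.prob_le_1[OF PQ] .
      moreover have "0 \<le> measure ?P A" "0 \<le> measure ?Q A" by (rule measure_nonneg)+
      moreover have "2 * t \<le> (36 * a + 2) * t" using assms t by (intro mult_right_mono) auto
      moreover have "1 < 2 * t" using False by simp
      ultimately show ?thesis by linarith
    next
      case True
      define c where "c = 1 - t"
      define s where "s = t * a / c"
      define d where "d = ln c / 2"
      have c: "1/2 \<le> c" "c \<le> 1" "0 < c" using t True by (auto simp: c_def)
      define A2 where "A2 = {y. c * y \<in> A}"
      define B where "B = {x. exp (2 * x) \<in> A}"
      have A2[measurable]: "A2 \<in> sets borel" unfolding A2_def by measurable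
      have B[measurable]: "B \<in> sets borel" unfolding B_def by measurable
      have S2[measurable]: "{y. y + s \<in> A2} \<in> sets borel" by measurable
      have "measure ?P A = (\<integral>x. indicator {y. y + s \<in> A2} (exp (2 * x)) * std_normal_density x \<partial>lborel)"
        unfolding P
      proof (intro Bochner_Integration.integral_cong refl)
        fix x
        have "c * (exp (2 * x) + s) = (1 - t) * exp (2 * x) + t * a"
          using c by (simp add: s_def c_def field_simps)
        then show "indicator A ((1 - t) * exp (2 * x) + t * a) * std_normal_density x =
          indicator {y. y + s \<in> A2} (exp (2 * x)) * std_normal_density x"
          by (simp add: A2_def indicator_def)
      qed
      also have "\<dots> = (\<integral>u. indicator {y. y + s \<in> A2} u * lnd u \<partial>lborel)"
        by (rule lnd_formula(2)[symmetric]) simp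
      also have "\<dots> = (\<integral>u. indicator A2 (u + s) * lnd u \<partial>lborel)"
        by (simp add: indicator_def)
      finally have P2: "measure ?P A = (\<integral>u. indicator A2 (u + s) * lnd u \<partial>lborel)" .
      have "(\<integral>u. indicator A2 u * lnd u \<partial>lborel) = (\<integral>x. indicator A2 (exp (2 * x)) * std_normal_density x \<partial>lborel)"
        by (rule lnd_formula(2)) simp
      also have "\<dots> = (\<integral>x. indicator B (x + d) * std_normal_density x \<partial>lborel)"
      proof (intro Bochner_Integration.integral_cong refl)
        fix x
        have "exp (2 * (x + d)) = c * exp (2 * x)"
        proof -
          have "2 * (x + d) = ln c + 2 * x" by (simp add: d_def algebra_simps)
          then have "exp (2 * (x + d)) = exp (ln c) * exp (2 * x)" by (simp add: exp_add)
          then show ?thesis using c by simp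
        qed
        then show "indicator A2 (exp (2 * x)) * std_normal_density x = indicator B (x + d) * std_normal_density x"
          by (simp add: A2_def B_def indicator_def)
      qed
      finally have R: "(\<integral>u. indicator A2 u * lnd u \<partial>lborel) = (\<integral>x. indicator B (x + d) * std_normal_density x \<partial>lborel)" .
      have Q2: "measure ?Q A = (\<integral>x. indicator B x * std_normal_density x \<partial>lborel)"
        unfolding Q by (simp add: B_def indicator_def)
      have lndi: "integrable lborel lnd" using lnd_formula(1)[of UNIV] by simp
      have e1: "abs ((\<integral>u. indicator A2 (u + s) * lnd u \<partial>lborel) - (\<integral>u. indicator A2 u * lnd u \<partial>lborel)) \<le> 2 * 9 * abs s"
        by (rule shift_bound[OF lnd_measurable lndi lnd_nonneg lnd_le lnd_inc lnd_dec A2])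
      have e2: "abs ((\<integral>x. indicator B (x + d) * std_normal_density x \<partial>lborel) - (\<integral>x. indicator B x * std_normal_density x \<partial>lborel)) \<le> 2 * 1 * abs d"
        by (rule shift_bound[OF borel_measurable_normal_density integrable_normal_density normal_density_nonneg snd_le snd_inc snd_dec B]) simp_all
      have sb: "abs s \<le> 2 * t * a"
      proof -
        have "0 \<le> s" using c t assms by (simp add: s_def)
        moreover have "s \<le> 2 * t * a"
        proof -
          have "t * a * 1 \<le> t * a * (2 * c)" using c t assms by (intro mult_left_mono) auto
          then have "t * a \<le> (2 * t * a) * c" by (simp add: algebra_simps)
          then show ?thesis unfolding s_def using c by (simp add: pos_divide_le_eq)
        qed
        ultimately show ?thesis by simp
      qed
      have db: "abs d \<le> t"
      proof -
        have "- t - 2 * t\<^sup>2 \<le> ln (1 - t)" using t True by (intro ln_one_minus_pos_lower_bound) auto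
        moreover have "ln (1 - t) \<le> 0" using c by (simp add: c_def)
        moreover have "t\<^sup>2 \<le> t / 2"
        proof -
          have "t * t \<le> t * (1/2)" using t True by (intro mult_left_mono) auto
          then show ?thesis by (simp add: power2_eq_square)
        qed
        ultimately show ?thesis unfolding d_def c_def by (simp add: abs_if field_simps)
      qed
      have "\<bar>measure ?P A - measure ?Q A\<bar> \<le> 2 * 9 * abs s + 2 * 1 * abs d"
        using e1 e2 unfolding P2 Q2 R by linarith
      also have "\<dots> \<le> (36 * a + 2) * t" using sb db by (simp add: algebra_simps)
      finally show ?thesis .
    qed
  qed
  show "tv_dist ?P ?Q \<le> (36 * a + 2) * t"
    unfolding tv_dist_def
  proof (rule cSUP_least)
    show "sets (borel :: real measure) \<noteq> {}" by auto
  next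
    fix A :: "real set" assume "A \<in> sets borel"
    then show "\<bar>measure ?P A - measure ?Q A\<bar> \<le> (36 * a + 2) * t" by (rule bnd)
  qed
qed

end
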